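(* Let $(F_S,\iota)$ be an embedded local étale algebra and $\Gamma\subseteq\mathrm{PGL}_2(F_S)$ a discrete subgroup. Then \[ \mathcal L^S_\Gamma\subseteq\bigcup_{\mathfrak p\in S}\Big(\mathbb P^1(F_\mathfrak p)\times\prod_{\mathfrak q\in S\setminus\{\mathfrak p\}}\mathbb P^1(\mathbf C)\Big), \] i.e. every limit point has at least one coordinate $x_\mathfrak p$ lying in $\mathbb P^1(F_\mathfrak p)$.
   Context: Fix a prime $p$ and let $\mathbf{C}$ be the completion of an algebraic closure of $\mathbb{Q}_p$ or of $\mathbb{F}_p((T))$. An embedded local étale algebra $(F_S,\iota)$ consists of a finite non-empty set $S$, non-Archimedean local fields $F_\mathfrak p$ ($\mathfrak p\in S$) of residue characteristic $p$ and the same characteristic as $\mathbf C$, and embeddings $\iota_\mathfrak p\colon F_\mathfrak p\hookrightarrow\mathbf C$, through which $\mathbb P^1(F_\mathfrak p)\subseteq\mathbb P^1(\mathbf C)$. $\mathrm{PGL}_2(F_S)=\prod_\mathfrak p\mathrm{PGL}_2(F_\mathfrak p)$ (with its locally compact topology) acts componentwise by Möbius transformations on $\mathbb P^1(\mathbf C_S)=\prod_{\mathfrak p\in S}\mathbb P^1(\mathbf C)$. For a subgroup $\Gamma$, $\mathcal L^S_\Gamma$ is the set of $x\in\mathbb P^1(\mathbf C_S)$ such that $\gamma_j(y)\to x$ for some $y$ and pairwise distinct $\gamma_j\in\Gamma$. *)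

theory Defs
  imports Complex_Main "HOL-Computational_Algebra.Polynomial"
begin

definition nonarch_abs :: "('c::field \<Rightarrow> real) \<Rightarrow> bool" where
  "nonarch_abs av \<longleftrightarrow>
     (\<forall>x. av x \<ge> 0) \<and> (\<forall>x. av x = 0 \<longleftrightarrow> x = 0) \<and>
     (\<forall>x y. av (x * y) = av x * av y) \<and>
     (\<forall>x y. av (x + y) \<le> max (av x) (av y))"

definition av_conv :: "('c::field \<Rightarrow> real) \<Rightarrow> (nat \<Rightarrow> 'c) \<Rightarrow> 'c \<Rightarrow> bool" where
  "av_conv av f l \<longleftrightarrow> (\<lambda>n. av (f n - l)) \<longlonglongrightarrow> 0"

definition av_cauchy :: "('c::field \<Rightarrow> real) \<Rightarrow> (nat \<Rightarrow> 'c) \<Rightarrow> bool" where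
  "av_cauchy av f \<longleftrightarrow> (\<forall>e>0. \<exists>N. \<forall>m\<ge>N. \<forall>n\<ge>N. av (f m - f n) < e)"

definition subfield :: "'c::field set \<Rightarrow> bool" where
  "subfield K \<longleftrightarrow> 0 \<in> K \<and> 1 \<in> K \<and> (\<forall>x\<in>K. \<forall>y\<in>K. x + y \<in> K \<and> x * y \<in> K) \<and>
     (\<forall>x\<in>K. - x \<in> K) \<and> (\<forall>x\<in>K. x \<noteq> 0 \<longrightarrow> inverse x \<in> K)"

text \<open>(The image of) a non-Archimedean local field inside the valued field:
  a non-discrete, locally compact subfield (closed balls sequentially compact).\<close>
definition local_subfield :: "('c::field \<Rightarrow> real) \<Rightarrow> 'c set \<Rightarrow> bool" where
  "local_subfield av K \<longleftrightarrow> subfield K \<and>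
     (\<forall>e>0. \<exists>x\<in>K. 0 < av x \<and> av x < e) \<and>
     (\<exists>r>0. \<forall>f::nat \<Rightarrow> 'c. (\<forall>n. f n \<in> K \<and> av (f n) \<le> r) \<longrightarrow>
         (\<exists>l\<in>K. \<exists>s. strict_mono s \<and> av_conv av (f \<circ> s) l))"

definition algebraic_over :: "'c::field set \<Rightarrow> 'c \<Rightarrow> bool" where
  "algebraic_over K z \<longleftrightarrow> (\<exists>q. q \<noteq> 0 \<and> (\<forall>i. coeff q i \<in> K) \<and> poly q z = 0)"

text \<open>\<open>(C, av)\<close> is the completion of an algebraic closure of a local field of residue
  characteristic \<open>p\<close> (equivalently of \<open>\<int>_p\<close>'s fraction field \<open>\<rat>_p\<close> or \<open>\<bbbF>_p((T))\<close>):
  complete, algebraically closed, \<open>|p| < 1\<close>, and the elements algebraic over some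
  local subfield are dense.\<close>
definition is_C :: "nat \<Rightarrow> ('c::field \<Rightarrow> real) \<Rightarrow> bool" where
  "is_C p av \<longleftrightarrow> prime p \<and> nonarch_abs av \<and> av (of_nat p) < 1 \<and>
     (\<forall>f. av_cauchy av f \<longrightarrow> (\<exists>l. av_conv av f l)) \<and>
     (\<forall>q::'c poly. degree q \<ge> 1 \<longrightarrow> (\<exists>z. poly q z = 0)) \<and>
     (\<exists>K. local_subfield av K \<and>
        (\<forall>z. \<forall>e>0. \<exists>w. algebraic_over K w \<and> av (z - w) < e))"

text \<open>\<open>\<bbbP>\<^sup>1(C)\<close> as \<open>'c option\<close>, with \<open>None\<close> the point at infinity.\<close>
type_synonym 'c p1 = "'c option"

definition in_P1 :: "'c set \<Rightarrow> 'c p1 \<Rightarrow> bool" where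
  "in_P1 K x \<longleftrightarrow> (case x of None \<Rightarrow> True | Some z \<Rightarrow> z \<in> K)"

text \<open>Chordal metric on \<open>\<bbbP>\<^sup>1(C)\<close> (induces its usual topology).\<close>
definition chord :: "('c::field \<Rightarrow> real) \<Rightarrow> 'c p1 \<Rightarrow> 'c p1 \<Rightarrow> real" where
  "chord av x y = (case (x, y) of
      (None, None) \<Rightarrow> 0
    | (None, Some b) \<Rightarrow> 1 / max 1 (av b)
    | (Some a, None) \<Rightarrow> 1 / max 1 (av a)
    | (Some a, Some b) \<Rightarrow> av (a - b) / (max 1 (av a) * max 1 (av b)))"

definition p1_conv :: "('c::field \<Rightarrow> real) \<Rightarrow> (nat \<Rightarrow> 'c p1) \<Rightarrow> 'c p1 \<Rightarrow> bool" where
  "p1_conv av f x \<longleftrightarrow> (\<lambda>n. chord av (f n) x) \<longlonglongrightarrow> 0"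

text \<open>2x2 matrices \<open>(a,b,c,d)\<close> = [[a,b],[c,d]].\<close>
type_synonym 'c mat2 = "'c \<times> 'c \<times> 'c \<times> 'c"

fun mdet :: "'c::field mat2 \<Rightarrow> 'c" where
  "mdet (a, b, c, d) = a * d - b * c"

fun mmul :: "'c::field mat2 \<Rightarrow> 'c mat2 \<Rightarrow> 'c mat2" where
  "mmul (a, b, c, d) (a', b', c', d') =
     (a * a' + b * c', a * b' + b * d', c * a' + d * c', c * b' + d * d')"

fun msc :: "'c::field \<Rightarrow> 'c mat2 \<Rightarrow> 'c mat2" where
  "msc l (a, b, c, d) = (l * a, l * b, l * c, l * d)"

definition mid :: "'c::field mat2" where "mid = (1, 0, 0, 1)"

fun madj :: "'c::field mat2 \<Rightarrow> 'c mat2" where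
  "madj (a, b, c, d) = (d, - b, - c, a)"

definition gl2 :: "'c::field set \<Rightarrow> 'c mat2 \<Rightarrow> bool" where
  "gl2 K m \<longleftrightarrow> (case m of (a, b, c, d) \<Rightarrow> a \<in> K \<and> b \<in> K \<and> c \<in> K \<and> d \<in> K) \<and> mdet m \<noteq> 0"

definition proj_eq :: "'c::field set \<Rightarrow> 'c mat2 \<Rightarrow> 'c mat2 \<Rightarrow> bool" where
  "proj_eq K m n \<longleftrightarrow> (\<exists>l\<in>K. l \<noteq> 0 \<and> n = msc l m)"

fun mclose :: "('c::field \<Rightarrow> real) \<Rightarrow> real \<Rightarrow> 'c mat2 \<Rightarrow> 'c mat2 \<Rightarrow> bool" where
  "mclose av e (a, b, c, d) (a', b', c', d') \<longleftrightarrow>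
     av (a - a') < e \<and> av (b - b') < e \<and> av (c - c') < e \<and> av (d - d') < e"

fun moebius :: "'c::field mat2 \<Rightarrow> 'c p1 \<Rightarrow> 'c p1" where
  "moebius (a, b, c, d) None = (if c = 0 then None else Some (a / c))"
| "moebius (a, b, c, d) (Some z) =
     (if c * z + d = 0 then None else Some ((a * z + b) / (c * z + d)))"

text \<open>An element of \<open>PGL_2(F_S)\<close> is represented by a family \<open>g\<close> with \<open>g \<pp> \<in> GL_2(F_\<pp>)\<close>
  for \<open>\<pp> \<in> S\<close> (values outside \<open>S\<close> are irrelevant).  A subgroup \<open>\<Gamma>\<close> is given by a set
  of representatives whose classes form a subgroup.\<close>

definition pgl_eq :: "'i set \<Rightarrow> ('i \<Rightarrow> 'c::field set) \<Rightarrow> ('i \<Rightarrow> 'c mat2) \<Rightarrow> ('i \<Rightarrow> 'c mat2) \<Rightarrow> bool" where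
  "pgl_eq S F g h \<longleftrightarrow> (\<forall>p\<in>S. proj_eq (F p) (g p) (h p))"

definition pgl_subgroup :: "'i set \<Rightarrow> ('i \<Rightarrow> 'c::field set) \<Rightarrow> ('i \<Rightarrow> 'c mat2) set \<Rightarrow> bool" where
  "pgl_subgroup S F \<Gamma> \<longleftrightarrow>
     (\<forall>g\<in>\<Gamma>. \<forall>p\<in>S. gl2 (F p) (g p)) \<and>
     (\<exists>e\<in>\<Gamma>. pgl_eq S F (\<lambda>_. mid) e) \<and>
     (\<forall>g\<in>\<Gamma>. \<forall>h\<in>\<Gamma>. \<exists>k\<in>\<Gamma>. pgl_eq S F (\<lambda>p. mmul (g p) (h p)) k) \<and>
     (\<forall>g\<in>\<Gamma>. \<exists>k\<in>\<Gamma>. pgl_eq S F (\<lambda>p. madj (g p)) k)"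

text \<open>Discreteness w.r.t. the (product of quotient) topology on \<open>PGL_2(F_S)\<close>:
  each element has a basic neighbourhood meeting \<open>\<Gamma>\<close> only in itself.\<close>
definition pgl_discrete :: "('c::field \<Rightarrow> real) \<Rightarrow> 'i set \<Rightarrow> ('i \<Rightarrow> 'c set) \<Rightarrow> ('i \<Rightarrow> 'c mat2) set \<Rightarrow> bool" where
  "pgl_discrete av S F \<Gamma> \<longleftrightarrow>
     (\<forall>g\<in>\<Gamma>. \<exists>e>0. \<forall>h\<in>\<Gamma>.
        (\<forall>p\<in>S. \<exists>l\<in>F p. l \<noteq> 0 \<and> mclose av e (msc l (h p)) (g p)) \<longrightarrow> pgl_eq S F g h)"

text \<open>The limit set \<open>\<L>^S_\<Gamma>\<close> in \<open>\<bbbP>\<^sup>1(C_S)\<close> (points are families \<open>x :: 'i \<Rightarrow> 'c p1\<close>,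
  only coordinates in \<open>S\<close> matter).\<close>
definition limit_set :: "('c::field \<Rightarrow> real) \<Rightarrow> 'i set \<Rightarrow> ('i \<Rightarrow> 'c set) \<Rightarrow> ('i \<Rightarrow> 'c mat2) set \<Rightarrow> ('i \<Rightarrow> 'c p1) set" where
  "limit_set av S F \<Gamma> = {x. \<exists>y \<gamma>. (\<forall>j. \<gamma> j \<in> \<Gamma>) \<and>
      (\<forall>i j. i \<noteq> j \<longrightarrow> \<not> pgl_eq S F (\<gamma> i) (\<gamma> j)) \<and>
      (\<forall>p\<in>S. p1_conv av (\<lambda>j. moebius (\<gamma> j p) (y p)) (x p))}"

end

theory Submission
  imports Defs
begin


context
  fixes av :: "'c::field \<Rightarrow> real"
  assumes na: "nonarch_abs av"
begin

lemma av_nonneg[simp]: "av x \<ge> 0" using na unfolding nonarch_abs_def by blast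
lemma av_eq0[simp]: "av x = 0 \<longleftrightarrow> x = 0" using na unfolding nonarch_abs_def by blast
lemma av_0[simp]: "av 0 = 0" using av_eq0 by blast
lemma av_mult: "av (x * y) = av x * av y" using na unfolding nonarch_abs_def by blast
lemma av_ultra: "av (x + y) \<le> max (av x) (av y)" using na unfolding nonarch_abs_def by blast
lemma av_pos: "x \<noteq> 0 \<Longrightarrow> av x > 0" using av_nonneg[of x] av_eq0[of x] by linarith
lemma av_1[simp]: "av 1 = 1"
proof -
  have "av 1 = av 1 * av 1" using av_mult[of 1 1] by simp
  moreover have "av 1 \<noteq> 0" by simp
  ultimately show ?thesis by (metis mult_cancel_right1)
qed
lemma av_m1[simp]: "av (-1) = 1"
proof -
  have "av (-1) * av (-1) = 1" using av_mult[of "-1" "-1"] by simp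
  moreover have "av (-1) \<ge> 0" by simp
  moreover have "(av (-1) - 1) * (av (-1) + 1) = av (-1) * av (-1) - 1" by (simp add: algebra_simps)
  ultimately have "(av (-1) - 1) * (av (-1) + 1) = 0" by simp
  moreover have "av (-1) + 1 \<noteq> 0" using \<open>av (-1) \<ge> 0\<close> by linarith
  ultimately show ?thesis by simp
qed
lemma av_minus[simp]: "av (- x) = av x"
  using av_mult[of "-1" x] by simp
lemma av_sym: "av (x - y) = av (y - x)"
  by (metis av_minus minus_diff_eq)
lemma av_add: "av (x + y) \<le> av x + av y"
  using av_ultra[of x y] av_nonneg[of x] av_nonneg[of y] by linarith
lemma av_diff_ultra: "av (x - y) \<le> max (av x) (av y)"
  using av_ultra[of x "-y"] by simp
lemma av_tri: "av x \<le> av (x - y) + av y"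
  using av_add[of "x - y" y] by simp
lemma av_tri2: "av (x - z) \<le> av (x - y) + av (y - z)"
  using av_add[of "x - y" "y - z"] by simp
lemma av_inverse: "av (inverse x) = inverse (av x)"
proof (cases "x = 0")
  case False
  then have "av x * av (inverse x) = 1" using av_mult[of x "inverse x"] by simp
  then show ?thesis by (metis inverse_unique)
qed simp
lemma av_divide: "av (x / y) = av x / av y"
  by (simp add: divide_inverse av_mult av_inverse)
lemma av_strict: "av y < av x \<Longrightarrow> av (x - y) = av x"
proof -
  assume a: "av y < av x"
  have "av x \<le> max (av (x - y)) (av y)" using av_ultra[of "x - y" y] by simp
  then have 1: "av x \<le> av (x - y)" using a by linarith
  have "av (x - y) \<le> av x" using av_diff_ultra[of x y] a by linarith
  with 1 show ?thesis by linarith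
qed
lemma av_strict2: "av (x - y) < av y \<Longrightarrow> av x = av y"
proof -
  assume "av (x - y) < av y"
  then have "av (y - x) < av y" by (simp add: av_sym)
  then have "av (y - (y - x)) = av y" by (rule av_strict)
  then show ?thesis by simp
qed

lemma conv_cong: "(\<lambda>n. av (f n - l)) \<longlonglongrightarrow> 0 \<longleftrightarrow> av_conv av f l"
  by (simp add: av_conv_def)

lemma conv_const: "av_conv av (\<lambda>n. c) c" by (simp add: av_conv_def)

lemma sq0: "\<lbrakk>g \<longlonglongrightarrow> 0; \<And>n. f n \<le> g n; \<And>n. 0 \<le> f n\<rbrakk> \<Longrightarrow> f \<longlonglongrightarrow> (0::real)"
  by (rule tendsto_sandwich[of "\<lambda>_. 0" f sequentially g]) (simp_all add: always_eventually)

lemma conv_add: "av_conv av f a \<Longrightarrow> av_conv av g b \<Longrightarrow> av_conv av (\<lambda>n. f n + g n) (a + b)"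
  unfolding av_conv_def
proof -
  assume f: "(\<lambda>n. av (f n - a)) \<longlonglongrightarrow> 0" and g: "(\<lambda>n. av (g n - b)) \<longlonglongrightarrow> 0"
  have "(\<lambda>n. av (f n - a) + av (g n - b)) \<longlonglongrightarrow> 0 + 0" by (rule tendsto_add[OF f g])
  then have "(\<lambda>n. av (f n - a) + av (g n - b)) \<longlonglongrightarrow> 0" by simp
  moreover have "av (f n + g n - (a + b)) \<le> av (f n - a) + av (g n - b)" for n
  proof -
    have e: "f n + g n - (a + b) = (f n - a) + (g n - b)" by (simp add: algebra_simps)
    show ?thesis unfolding e by (rule av_add)
  qed
  ultimately show "(\<lambda>n. av (f n + g n - (a + b))) \<longlonglongrightarrow> 0" by (rule sq0) simp_all
qed

lemma conv_minus: "av_conv av f a \<Longrightarrow> av_conv av (\<lambda>n. - f n) (- a)"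
proof -
  have "av (- f n - - a) = av (f n - a)" for n
    using av_minus[of "f n - a"] by (simp add: algebra_simps)
  then show "av_conv av f a \<Longrightarrow> av_conv av (\<lambda>n. - f n) (- a)" unfolding av_conv_def by simp
qed

lemma conv_diff: "av_conv av f a \<Longrightarrow> av_conv av g b \<Longrightarrow> av_conv av (\<lambda>n. f n - g n) (a - b)"
  using conv_add[of f a "\<lambda>n. - g n" "-b"] conv_minus[of g b] by simp

lemma conv_mult: "av_conv av f a \<Longrightarrow> av_conv av g b \<Longrightarrow> av_conv av (\<lambda>n. f n * g n) (a * b)"
  unfolding av_conv_def
proof -
  assume f: "(\<lambda>n. av (f n - a)) \<longlonglongrightarrow> 0" and g: "(\<lambda>n. av (g n - b)) \<longlonglongrightarrow> 0"
  have "(\<lambda>n. av (f n - a) * av (g n - b) + av a * av (g n - b) + av (f n - a) * av b) \<longlonglongrightarrow> 0 * 0 + av a * 0 + 0 * av b"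
    by (intro tendsto_intros f g)
  then have L: "(\<lambda>n. av (f n - a) * av (g n - b) + av a * av (g n - b) + av (f n - a) * av b) \<longlonglongrightarrow> 0" by simp
  have "av (f n * g n - a * b) \<le> av (f n - a) * av (g n - b) + av a * av (g n - b) + av (f n - a) * av b" for n
  proof -
    have e: "f n * g n - a * b = (f n - a) * (g n - b) + a * (g n - b) + (f n - a) * b" by (simp add: algebra_simps)
    have "av (f n * g n - a * b) \<le> av ((f n - a) * (g n - b) + a * (g n - b)) + av ((f n - a) * b)"
      unfolding e by (rule av_add)
    also have "\<dots> \<le> av ((f n - a) * (g n - b)) + av (a * (g n - b)) + av ((f n - a) * b)"
      using av_add by simp
    finally show ?thesis by (simp add: av_mult)
  qed
  with L show "(\<lambda>n. av (f n * g n - a * b)) \<longlonglongrightarrow> 0" by (rule sq0) simp_all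
qed

lemma conv_unique: "av_conv av f a \<Longrightarrow> av_conv av f b \<Longrightarrow> a = b"
  unfolding av_conv_def
proof -
  assume f: "(\<lambda>n. av (f n - a)) \<longlonglongrightarrow> 0" and g: "(\<lambda>n. av (f n - b)) \<longlonglongrightarrow> 0"
  have "(\<lambda>n. av (f n - a) + av (f n - b)) \<longlonglongrightarrow> 0" using tendsto_add[OF f g] by simp
  moreover have "av (a - b) \<le> av (f n - a) + av (f n - b)" for n
    using av_tri2[where x=a and y="f n" and z=b] av_sym[of a "f n"] by linarith
  ultimately have "(\<lambda>n. av (a - b)) \<longlonglongrightarrow> 0" by (rule sq0) simp_all
  then have "av (a - b) = 0" using LIMSEQ_const_iff by blast
  then show "a = b" by simp
qed

lemma conv_subseq: "av_conv av f a \<Longrightarrow> strict_mono s \<Longrightarrow> av_conv av (f \<circ> s) a"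
  unfolding av_conv_def using LIMSEQ_subseq_LIMSEQ[of "\<lambda>n. av (f n - a)" 0 s] by (simp add: o_def)

lemma conv_av: "av_conv av f a \<Longrightarrow> (\<lambda>n. av (f n)) \<longlonglongrightarrow> av a"
proof -
  assume "av_conv av f a"
  then have f: "(\<lambda>n. av (f n - a)) \<longlonglongrightarrow> 0" by (simp add: av_conv_def)
  have b: "\<bar>av (f n) - av a\<bar> \<le> av (f n - a)" for n
    using av_tri[of "f n" a] av_tri[of a "f n"] av_sym[of a "f n"] by simp
  then have "(\<lambda>n. \<bar>av (f n) - av a\<bar>) \<longlonglongrightarrow> 0" by (rule sq0[OF f]) (simp_all add: b)
  then have "(\<lambda>n. av (f n) - av a) \<longlonglongrightarrow> 0" by (simp add: tendsto_rabs_zero_iff)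
  then show ?thesis by (simp add: LIM_zero_iff)
qed


lemma conv_shift: "av_conv av u z \<Longrightarrow> av_conv av (\<lambda>n. u (n + N)) z"
  unfolding av_conv_def by (rule LIMSEQ_ignore_initial_segment)

lemma closed_K:
  assumes K: "local_subfield av K" and u: "\<forall>n. u n \<in> K" and c: "av_conv av u z"
  shows "z \<in> K"
proof -
  have sf: "subfield K" using K unfolding local_subfield_def by blast
  obtain r where r: "r > 0" and comp: "\<forall>f::nat \<Rightarrow> 'c. (\<forall>n. f n \<in> K \<and> av (f n) \<le> r) \<longrightarrow>
         (\<exists>l\<in>K. \<exists>s. strict_mono s \<and> av_conv av (f \<circ> s) l)"
    using K unfolding local_subfield_def by blast
  have "\<forall>\<^sub>F n in sequentially. av (u n - z) < 1"
    using c unfolding av_conv_def by (rule order_tendstoD) simp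
  then obtain N where N: "\<And>n. n \<ge> N \<Longrightarrow> av (u n - z) < 1" by (auto simp: eventually_sequentially)
  define B where "B = max 1 (av z)"
  have B1: "B \<ge> 1" unfolding B_def by simp
  have ub: "av (u n) \<le> B" if "n \<ge> N" for n
  proof -
    have "av (u n) = av ((u n - z) + z)" by simp
    also have "\<dots> \<le> max (av (u n - z)) (av z)" by (rule av_ultra)
    finally show ?thesis using N[OF that] unfolding B_def by linarith
  qed
  obtain t where t: "t \<in> K" "0 < av t" "av t < r / B"
  proof -
    have "r / B > 0" using B1 r by simp
    then show ?thesis using K that unfolding local_subfield_def by blast
  qed
  define v where "v n = t * u (n + N)" for n
  have "\<forall>n. v n \<in> K \<and> av (v n) \<le> r"
  proof
    fix n
    have "v n \<in> K" using sf t u unfolding v_def subfield_def by blast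
    moreover have "av (v n) = av t * av (u (n + N))" unfolding v_def by (rule av_mult)
    moreover have "av t * av (u (n + N)) \<le> (r / B) * B"
      using t ub[of "n + N"] B1 by (intro mult_mono) auto
    ultimately show "v n \<in> K \<and> av (v n) \<le> r" using B1 by simp
  qed
  then obtain l s where l: "l \<in> K" "strict_mono s" "av_conv av (v \<circ> s) l" using comp by blast
  have "av_conv av v (t * z)" unfolding v_def
    by (rule conv_mult[OF conv_const conv_shift[OF c]])
  then have "av_conv av (v \<circ> s) (t * z)" using l(2) by (rule conv_subseq)
  then have "t * z = l" using l(3) by (rule conv_unique)
  then have "z = l / t" using t(2) by (auto simp: field_simps)
  moreover have "t \<noteq> 0" using t(2) by auto
  ultimately show "z \<in> K" using sf l(1) t(1) unfolding subfield_def by (simp add: divide_inverse)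
qed

lemma chord_small:
  assumes "chord av (Some a) (Some z) < 1 / max 1 (av z)"
  shows "av a \<le> max 1 (av z)" "av (a - z) \<le> (max 1 (av z))^2 * chord av (Some a) (Some z)"
proof -
  let ?R = "max 1 (av z)"
  show 1: "av a \<le> ?R"
  proof (rule ccontr)
    assume "\<not> av a \<le> ?R"
    then have g: "av a > ?R" by (meson not_le)
    then have "av (a - z) = av a" by (intro av_strict) linarith
    moreover have "max 1 (av a) = av a" using g by simp
    ultimately have "chord av (Some a) (Some z) = av a / (av a * ?R)" unfolding chord_def by simp
    also have "\<dots> = 1 / ?R"
    proof -
      have "av a > 0" "?R > 0" using g by auto
      moreover have "a \<noteq> 0" using \<open>av a > 0\<close> by auto
      ultimately show ?thesis by (simp add: field_simps)
    qed
    finally show False using assms by simp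
  qed
  have "chord av (Some a) (Some z) = av (a - z) / (max 1 (av a) * ?R)" unfolding chord_def by simp
  moreover have "max 1 (av a) > 0" "?R > 0" by auto
  ultimately have "av (a - z) = chord av (Some a) (Some z) * (max 1 (av a) * ?R)" by (simp add: field_simps)
  also have "\<dots> \<le> chord av (Some a) (Some z) * (?R * ?R)"
  proof (rule mult_left_mono)
    show "max 1 (av a) * ?R \<le> ?R * ?R" using 1 by (intro mult_right_mono) auto
    show "0 \<le> chord av (Some a) (Some z)" unfolding chord_def by simp
  qed
  finally show "av (a - z) \<le> ?R^2 * chord av (Some a) (Some z)" by (simp add: power2_eq_square mult_ac)
qed

lemma conv_Some:
  assumes "p1_conv av f (Some z)"
  obtains N w where "\<And>n. n \<ge> N \<Longrightarrow> f n = Some (w n)" "(\<lambda>n. av (w n - z)) \<longlonglongrightarrow> 0"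
proof -
  let ?R = "max 1 (av z)"
  have c: "(\<lambda>n. chord av (f n) (Some z)) \<longlonglongrightarrow> 0" using assms unfolding p1_conv_def .
  have "\<forall>\<^sub>F n in sequentially. chord av (f n) (Some z) < 1 / ?R"
    using c by (rule order_tendstoD) simp
  then obtain N where N: "\<And>n. n \<ge> N \<Longrightarrow> chord av (f n) (Some z) < 1 / ?R" by (auto simp: eventually_sequentially)
  define w where "w n = (case f n of None \<Rightarrow> z | Some a \<Rightarrow> a)" for n
  have fs: "f n = Some (w n)" if "n \<ge> N" for n
  proof (cases "f n")
    case None
    then have "chord av (f n) (Some z) = 1 / ?R" unfolding chord_def by simp
    then show ?thesis using N[OF that] by simp
  qed (simp add: w_def)
  have bd: "av (w n - z) \<le> ?R^2 * chord av (f n) (Some z)" if "n \<ge> N" for n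
    using chord_small(2)[of "w n" z] N[OF that] fs[OF that] by simp
  have "(\<lambda>n. ?R^2 * chord av (f n) (Some z)) \<longlonglongrightarrow> ?R^2 * 0" by (intro tendsto_intros c)
  then have L: "(\<lambda>n. ?R^2 * chord av (f n) (Some z)) \<longlonglongrightarrow> 0" by simp
  have "(\<lambda>n. av (w n - z)) \<longlonglongrightarrow> 0"
  proof (rule tendsto_sandwich[of "\<lambda>_. 0" _ sequentially, OF _ _ tendsto_const L])
    show "\<forall>\<^sub>F n in sequentially. 0 \<le> av (w n - z)" by simp
    show "\<forall>\<^sub>F n in sequentially. av (w n - z) \<le> ?R^2 * chord av (f n) (Some z)"
      using bd by (auto simp: eventually_sequentially)
  qed
  with fs show ?thesis using that by blast
qed

lemma conv_None:
  assumes "p1_conv av f None"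
  obtains N where "\<And>n a. n \<ge> N \<Longrightarrow> f n = Some a \<Longrightarrow> av a > B"
proof -
  have c: "(\<lambda>n. chord av (f n) None) \<longlonglongrightarrow> 0" using assms unfolding p1_conv_def .
  have "\<forall>\<^sub>F n in sequentially. chord av (f n) None < 1 / max 1 B"
    using c by (rule order_tendstoD) simp
  then obtain N where N: "\<And>n. n \<ge> N \<Longrightarrow> chord av (f n) None < 1 / max 1 B" by (auto simp: eventually_sequentially)
  have "av a > B" if "n \<ge> N" "f n = Some a" for n a
  proof -
    have "1 / max 1 (av a) < 1 / max 1 B" using N[OF that(1)] that(2) unfolding chord_def by simp
    have "max 1 B < max 1 (av a)"
    proof (rule ccontr)
      assume "\<not> max 1 B < max 1 (av a)"
      then have "max 1 (av a) \<le> max 1 B" by (simp only: not_less)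
      then have "1 / max 1 B \<le> 1 / max 1 (av a)" by (intro divide_left_mono) auto
      with \<open>1 / max 1 (av a) < 1 / max 1 B\<close> show False by simp
    qed
    then show ?thesis
    proof (rule contrapos_pp)
      assume "\<not> B < av a"
      then have "av a \<le> B" by simp
      then have "max 1 (av a) \<le> max 1 B" by (rule max.mono[OF order.refl])
      then show "\<not> max 1 B < max 1 (av a)" by (simp only: not_less)
    qed
  qed
  then show ?thesis using that by blast
qed

lemma P1_closed:
  assumes K: "local_subfield av K" and f: "\<forall>n. in_P1 K (f n)" and c: "p1_conv av f x"
  shows "in_P1 K x"
proof (cases x)
  case (Some z)
  then obtain N w where N: "\<And>n. n \<ge> N \<Longrightarrow> f n = Some (w n)" and w: "(\<lambda>n. av (w n - z)) \<longlonglongrightarrow> 0"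
    using c conv_Some by metis
  have "w (n + N) \<in> K" for n
  proof -
    have "f (n + N) = Some (w (n + N))" using N by simp
    then show ?thesis using f[rule_format, of "n + N"] unfolding in_P1_def by simp
  qed
  moreover have "av_conv av (\<lambda>n. w (n + N)) z" using w unfolding av_conv_def by (rule LIMSEQ_ignore_initial_segment)
  ultimately have "z \<in> K" by (intro closed_K[OF K]) auto
  then show ?thesis using Some unfolding in_P1_def by simp
qed (simp add: in_P1_def)

end


fun m1 :: "'c mat2 \<Rightarrow> 'c" where "m1 (a, b, c, d) = a"
fun m2 :: "'c mat2 \<Rightarrow> 'c" where "m2 (a, b, c, d) = b"
fun m3 :: "'c mat2 \<Rightarrow> 'c" where "m3 (a, b, c, d) = c"
fun m4 :: "'c mat2 \<Rightarrow> 'c" where "m4 (a, b, c, d) = d"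

lemma mat_eta: "X = (m1 X, m2 X, m3 X, m4 X)" by (cases X) auto

lemma mmul_ents: "mmul X Y = (m1 X * m1 Y + m2 X * m3 Y, m1 X * m2 Y + m2 X * m4 Y,
   m3 X * m1 Y + m4 X * m3 Y, m3 X * m2 Y + m4 X * m4 Y)"
  by (cases X; cases Y) auto
lemma madj_ents: "madj X = (m4 X, - m2 X, - m3 X, m1 X)" by (cases X) auto
lemma msc_ents: "msc l X = (l * m1 X, l * m2 X, l * m3 X, l * m4 X)" by (cases X) auto
lemma mdet_ents: "mdet X = m1 X * m4 X - m2 X * m3 X" by (cases X) auto

definition ment :: "'c::field set \<Rightarrow> 'c mat2 \<Rightarrow> bool" where
  "ment K X \<longleftrightarrow> m1 X \<in> K \<and> m2 X \<in> K \<and> m3 X \<in> K \<and> m4 X \<in> K"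

definition mnorm :: "('c::field \<Rightarrow> real) \<Rightarrow> 'c mat2 \<Rightarrow> real" where
  "mnorm av X = max (max (av (m1 X)) (av (m2 X))) (max (av (m3 X)) (av (m4 X)))"

definition mconv :: "('c::field \<Rightarrow> real) \<Rightarrow> (nat \<Rightarrow> 'c mat2) \<Rightarrow> 'c mat2 \<Rightarrow> bool" where
  "mconv av f M \<longleftrightarrow> av_conv av (\<lambda>j. m1 (f j)) (m1 M) \<and> av_conv av (\<lambda>j. m2 (f j)) (m2 M) \<and>
     av_conv av (\<lambda>j. m3 (f j)) (m3 M) \<and> av_conv av (\<lambda>j. m4 (f j)) (m4 M)"

lemma gl2_ment: "gl2 K X \<Longrightarrow> ment K X"
  unfolding gl2_def ment_def by (cases X) auto

lemma sf_ops:
  assumes "subfield K" "x \<in> K" "y \<in> K"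
  shows "x + y \<in> K" "x * y \<in> K" "- x \<in> K" "x - y \<in> K" "x / y \<in> K" "0 \<in> K" "1 \<in> K"
proof -
  show "x + y \<in> K" "x * y \<in> K" "- x \<in> K" "0 \<in> K" "1 \<in> K" using assms unfolding subfield_def by auto
  then show "x - y \<in> K" using assms unfolding subfield_def by (metis diff_conv_add_uminus)
  show "x / y \<in> K"
  proof (cases "y = 0")
    case True then show ?thesis using assms unfolding subfield_def by simp
  next
    case False then show ?thesis using assms unfolding subfield_def by (simp add: divide_inverse)
  qed
qed

lemma ment_det: "subfield K \<Longrightarrow> ment K X \<Longrightarrow> mdet X \<in> K"
  unfolding ment_def mdet_ents by (intro sf_ops) auto

lemma moebius_P1: "subfield K \<Longrightarrow> ment K X \<Longrightarrow> in_P1 K y \<Longrightarrow> in_P1 K (moebius X y)"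
proof -
  assume sf: "subfield K" and m: "ment K X" and y: "in_P1 K y"
  obtain a b c d where X: "X = (a, b, c, d)" by (cases X) auto
  have abcd: "a \<in> K" "b \<in> K" "c \<in> K" "d \<in> K" using m unfolding X ment_def by auto
  show ?thesis
  proof (cases y)
    case None then show ?thesis unfolding X in_P1_def using abcd sf_ops[OF sf] by auto
  next
    case (Some z)
    then have "z \<in> K" using y unfolding in_P1_def by simp
    then show ?thesis unfolding X in_P1_def Some using abcd sf_ops[OF sf] by auto
  qed
qed

lemma moebius_msc: "l \<noteq> 0 \<Longrightarrow> moebius (msc l X) y = moebius X y"
proof -
  assume l: "l \<noteq> 0"
  obtain a b c d where X: "X = (a, b, c, d)" by (cases X) auto
  show ?thesis
  proof (cases y)
    case None then show ?thesis unfolding X using l by simp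
  next
    case (Some z)
    have e: "l * c * z + l * d = l * (c * z + d)" "l * a * z + l * b = l * (a * z + b)" by (simp_all add: algebra_simps)
    show ?thesis unfolding X Some using l by (simp add: e)
  qed
qed

lemma mmul_adj: "mmul X (madj X) = msc (mdet X) mid"
  by (cases X) (auto simp: mid_def algebra_simps)

lemma msc_msc: "msc a (msc b X) = msc (a * b) X" by (cases X) (auto simp: algebra_simps)
lemma mmul_msc_r: "mmul X (msc b Y) = msc b (mmul X Y)" by (cases X; cases Y) (auto simp: algebra_simps)
lemma mmul_msc_l: "mmul (msc b X) Y = msc b (mmul X Y)" by (cases X; cases Y) (auto simp: algebra_simps)
lemma madj_msc: "madj (msc b X) = msc b (madj X)" by (cases X) auto
lemma mmul_assoc: "mmul (mmul X Y) Z = mmul X (mmul Y Z)" by (cases X; cases Y; cases Z) (auto simp: algebra_simps)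
lemma madj_mmul: "mmul (madj X) X = msc (mdet X) mid"
  by (cases X) (auto simp: mid_def algebra_simps)
lemma mmul_mid: "mmul X mid = X" by (cases X) (auto simp: mid_def)
lemma msc_1: "msc 1 X = X" by (cases X) auto
lemma msc_inj: "l \<noteq> 0 \<Longrightarrow> msc l X = msc l Y \<Longrightarrow> X = Y" by (cases X; cases Y) auto
lemma msc_zero: "msc l X = (0,0,0,0) \<Longrightarrow> l = 0 \<or> X = (0,0,0,0)" by (cases X) auto
lemma mdet_zero: "mdet (0,0,0,0) = 0" by simp

context
  fixes av :: "'c::field \<Rightarrow> real"
  assumes na: "nonarch_abs av"
begin

lemmas [simp] = av_0[OF na] av_eq0[OF na] av_nonneg[OF na] av_minus[OF na] av_1[OF na]

lemma mconv_mmul: "mconv av f M \<Longrightarrow> mconv av g N \<Longrightarrow> mconv av (\<lambda>j. mmul (f j) (g j)) (mmul M N)"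
  unfolding mconv_def mmul_ents by (simp add: conv_add[OF na] conv_mult[OF na])

lemma mconv_madj: "mconv av f M \<Longrightarrow> mconv av (\<lambda>j. madj (f j)) (madj M)"
  unfolding mconv_def madj_ents by (simp add: conv_minus[OF na])

lemma mconv_msc: "mconv av f M \<Longrightarrow> mconv av (\<lambda>j. msc l (f j)) (msc l M)"
  unfolding mconv_def msc_ents by (simp add: conv_mult[OF na] conv_const[OF na])

lemma conv_subseq': "av_conv av g l \<Longrightarrow> strict_mono s \<Longrightarrow> av_conv av (\<lambda>j. g (s j)) l"
  using conv_subseq[OF na] by (simp add: o_def)

lemma mconv_subseq: "mconv av f M \<Longrightarrow> strict_mono s \<Longrightarrow> mconv av (\<lambda>j. f (s j)) M"
  unfolding mconv_def using conv_subseq'[of "\<lambda>j. m1 (f j)" _ s] conv_subseq'[of "\<lambda>j. m2 (f j)" _ s]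
    conv_subseq'[of "\<lambda>j. m3 (f j)" _ s] conv_subseq'[of "\<lambda>j. m4 (f j)" _ s] by simp

lemma mconv_shift: "mconv av f M \<Longrightarrow> mconv av (\<lambda>j. f (j + k)) M"
  unfolding mconv_def using conv_shift[OF na, of "\<lambda>j. m1 (f j)" _ k] conv_shift[OF na, of "\<lambda>j. m2 (f j)" _ k]
    conv_shift[OF na, of "\<lambda>j. m3 (f j)" _ k] conv_shift[OF na, of "\<lambda>j. m4 (f j)" _ k] by simp

lemma mconv_close: "mconv av f M \<Longrightarrow> e > 0 \<Longrightarrow> \<forall>\<^sub>F j in sequentially. mclose av e (f j) M"
proof -
  assume c: "mconv av f M" and e: "e > 0"
  have ev: "\<forall>\<^sub>F j in sequentially. av (g j - l) < e" if "av_conv av g l" for g l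
    using that unfolding av_conv_def using e by (rule order_tendstoD)
  have "\<forall>\<^sub>F j in sequentially. av (m1 (f j) - m1 M) < e \<and> av (m2 (f j) - m2 M) < e \<and>
      av (m3 (f j) - m3 M) < e \<and> av (m4 (f j) - m4 M) < e"
    using c unfolding mconv_def by (intro eventually_conj ev) auto
  then show ?thesis
  proof (rule eventually_mono)
    fix j assume "av (m1 (f j) - m1 M) < e \<and> av (m2 (f j) - m2 M) < e \<and>
      av (m3 (f j) - m3 M) < e \<and> av (m4 (f j) - m4 M) < e"
    then show "mclose av e (f j) M"
      by (subst mat_eta[of "f j"], subst mat_eta[of M]) simp
  qed
qed

lemma mnorm_msc: "mnorm av (msc l X) = av l * mnorm av X"
  unfolding mnorm_def msc_ents by (simp add: av_mult[OF na] max_mult_distrib_left)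

lemma mnorm_pos: "X \<noteq> (0,0,0,0) \<Longrightarrow> mnorm av X > 0"
proof -
  assume "X \<noteq> (0,0,0,0)"
  then have "m1 X \<noteq> 0 \<or> m2 X \<noteq> 0 \<or> m3 X \<noteq> 0 \<or> m4 X \<noteq> 0" by (metis mat_eta)
  then show ?thesis unfolding mnorm_def using av_pos[OF na] av_nonneg[OF na]
    by (smt (verit, ccfv_SIG) max.cobounded1 max.cobounded2)
qed

lemma mnorm_attained: "\<exists>e. (e = m1 X \<or> e = m2 X \<or> e = m3 X \<or> e = m4 X) \<and> av e = mnorm av X"
  unfolding mnorm_def by (auto simp: max_def)

lemma normalize:
  assumes sf: "subfield K" and g: "gl2 K X" and rho: "\<rho> \<in> K" "\<rho> \<noteq> 0"
  shows "\<exists>\<sigma>\<in>K. \<sigma> \<noteq> 0 \<and> ment K (msc \<sigma> X) \<and> mnorm av (msc \<sigma> X) = av \<rho>"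
proof -
  have m: "ment K X" using g by (rule gl2_ment)
  have "X \<noteq> (0,0,0,0)" using g unfolding gl2_def by auto
  then have np: "mnorm av X > 0" by (rule mnorm_pos)
  obtain e where e: "e = m1 X \<or> e = m2 X \<or> e = m3 X \<or> e = m4 X" "av e = mnorm av X"
    using mnorm_attained by blast
  have eK: "e \<in> K" using e(1) m unfolding ment_def by auto
  have e0: "e \<noteq> 0" using e(2) np by auto
  define \<sigma> where "\<sigma> = \<rho> / e"
  have sK: "\<sigma> \<in> K" unfolding \<sigma>_def by (rule sf_ops[OF sf rho(1) eK])
  have s0: "\<sigma> \<noteq> 0" unfolding \<sigma>_def using rho e0 by simp
  have "ment K (msc \<sigma> X)" using m sK unfolding ment_def msc_ents by (simp add: sf_ops[OF sf])
  moreover have "mnorm av (msc \<sigma> X) = av \<rho>"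
    unfolding mnorm_msc \<sigma>_def av_divide[OF na] e(2)[symmetric] using e0 by simp
  ultimately show ?thesis using sK s0 by blast
qed

lemma mat_compact:
  assumes K: "local_subfield av K"
  obtains r where "r > 0" "\<And>f :: nat \<Rightarrow> 'c mat2. (\<And>j. ment K (f j) \<and> mnorm av (f j) \<le> r) \<Longrightarrow>
     \<exists>s M. strict_mono s \<and> ment K M \<and> mconv av (\<lambda>j. f (s j)) M"
proof -
  obtain r where r: "r > 0" and comp: "\<forall>f::nat \<Rightarrow> 'c. (\<forall>n. f n \<in> K \<and> av (f n) \<le> r) \<longrightarrow>
         (\<exists>l\<in>K. \<exists>s. strict_mono s \<and> av_conv av (f \<circ> s) l)"
    using K unfolding local_subfield_def by blast
  have comp': "\<exists>l\<in>K. \<exists>s. strict_mono s \<and> av_conv av (\<lambda>j. h (t (s j))) l"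
    if "\<And>n. h n \<in> K \<and> av (h n) \<le> r" for h :: "nat \<Rightarrow> 'c" and t :: "nat \<Rightarrow> nat"
  proof -
    have "\<forall>n. (h \<circ> t) n \<in> K \<and> av ((h \<circ> t) n) \<le> r" using that by simp
    then obtain l s where "l \<in> K" "strict_mono s" "av_conv av (h \<circ> t \<circ> s) l" using comp by blast
    then show ?thesis by (auto simp: o_def)
  qed
  have X: "\<exists>s M. strict_mono s \<and> ment K M \<and> mconv av (\<lambda>j. f (s j)) M"
    if f: "\<And>j. ment K (f j) \<and> mnorm av (f j) \<le> r" for f :: "nat \<Rightarrow> 'c mat2"
  proof -
    have b: "m1 (f j) \<in> K \<and> av (m1 (f j)) \<le> r" "m2 (f j) \<in> K \<and> av (m2 (f j)) \<le> r"
      "m3 (f j) \<in> K \<and> av (m3 (f j)) \<le> r" "m4 (f j) \<in> K \<and> av (m4 (f j)) \<le> r" for j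
      using f[of j] unfolding ment_def mnorm_def by auto
    obtain l1 s1 where 1: "l1 \<in> K" "strict_mono s1" "av_conv av (\<lambda>j. m1 (f (id (s1 j)))) l1"
      using comp'[of "\<lambda>n. m1 (f n)" id] b(1) by auto
    obtain l2 s2 where 2: "l2 \<in> K" "strict_mono s2" "av_conv av (\<lambda>j. m2 (f (s1 (s2 j)))) l2"
      using comp'[of "\<lambda>n. m2 (f n)" s1] b(2) by auto
    obtain l3 s3 where 3: "l3 \<in> K" "strict_mono s3" "av_conv av (\<lambda>j. m3 (f (s1 (s2 (s3 j))))) l3"
      using comp'[of "\<lambda>n. m3 (f n)" "s1 \<circ> s2"] b(3) by auto
    obtain l4 s4 where 4: "l4 \<in> K" "strict_mono s4" "av_conv av (\<lambda>j. m4 (f (s1 (s2 (s3 (s4 j)))))) l4"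
      using comp'[of "\<lambda>n. m4 (f n)" "s1 \<circ> s2 \<circ> s3"] b(4) by auto
    define s where "s = s1 \<circ> s2 \<circ> s3 \<circ> s4"
    have sm: "strict_mono s" unfolding s_def using 1 2 3 4 by (intro strict_mono_o) auto
    have sm34: "strict_mono (s3 \<circ> s4)" using 3 4 by (intro strict_mono_o) auto
    have sm234: "strict_mono (s2 \<circ> s3 \<circ> s4)" using 2 sm34 by (metis comp_assoc strict_mono_o)
    have c1: "av_conv av (\<lambda>j. m1 (f (s j))) l1"
      using conv_subseq[OF na 1(3) sm234] by (simp add: s_def o_def)
    have c2: "av_conv av (\<lambda>j. m2 (f (s j))) l2"
      using conv_subseq[OF na 2(3) sm34] by (simp add: s_def o_def)
    have c3: "av_conv av (\<lambda>j. m3 (f (s j))) l3"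
      using conv_subseq[OF na 3(3), of "s4"] 4 by (simp add: s_def o_def)
    have c4: "av_conv av (\<lambda>j. m4 (f (s j))) l4"
      using 4 by (simp add: s_def o_def)
    have "mconv av (\<lambda>j. f (s j)) (l1, l2, l3, l4)" unfolding mconv_def using c1 c2 c3 c4 by simp
    moreover have "ment K (l1, l2, l3, l4)" unfolding ment_def using 1 2 3 4 by simp
    ultimately show ?thesis using sm by blast
  qed
  show ?thesis by (rule that[OF r X])
qed

end


lemma common_subseq:
  fixes P :: "'i \<Rightarrow> (nat \<Rightarrow> nat) \<Rightarrow> bool"
  assumes "finite S"
    and "\<And>p (t::nat \<Rightarrow> nat). p \<in> S \<Longrightarrow> strict_mono t \<Longrightarrow> \<exists>u::nat \<Rightarrow> nat. strict_mono u \<and> P p (t \<circ> u)"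
    and cl: "\<And>p t (u::nat \<Rightarrow> nat). P p t \<Longrightarrow> strict_mono u \<Longrightarrow> P p (t \<circ> u)"
  shows "\<exists>s::nat \<Rightarrow> nat. strict_mono s \<and> (\<forall>p\<in>S. P p s)"
  using assms(1,2)
proof (induction S rule: finite_induct)
  case empty
  show ?case by (intro exI[of _ id]) (simp add: strict_mono_def)
next
  case (insert q S)
  then obtain s where s: "strict_mono s" "\<forall>p\<in>S. P p s" by blast
  obtain u where u: "strict_mono u" "P q (s \<circ> u)" using insert.prems[of q s] s by blast
  have "strict_mono (s \<circ> u)" using s u by (intro strict_mono_o) auto
  moreover have "\<forall>p\<in>insert q S. P p (s \<circ> u)" using s(2) u cl by blast
  ultimately show ?case by blast
qed

lemma rank1:
  assumes sf: "subfield K" and K: "A \<in> K" "B \<in> K" "C \<in> K" "D \<in> K"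
    and d: "A * D - B * C = 0" and z: "z \<notin> K" and nz: "(A, B, C, D) \<noteq> (0, 0, 0, 0)"
  shows "(C * z + D \<noteq> 0 \<and> (A * z + B) / (C * z + D) \<in> K) \<or> (C * z + D = 0 \<and> A * z + B \<noteq> 0)"
proof (cases "C = 0")
  case False
  have V: "C * z + D \<noteq> 0"
  proof
    assume "C * z + D = 0"
    then have "z = - D / C" using False by (simp add: field_simps add_eq_0_iff)
    then have "z \<in> K" using sf_ops[OF sf] K by simp
    then show False using z by simp
  qed
  have "A * (C * z + D) = C * (A * z + B)" using d by (simp add: algebra_simps)
  then have "(A * z + B) / (C * z + D) = A / C" using V False by (simp add: field_simps)
  then show ?thesis using V sf_ops[OF sf] K by simp
next
  case True
  show ?thesis
  proof (cases "D = 0")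
    case False
    then have "A = 0" using d True by simp
    then show ?thesis using True False sf_ops[OF sf] K by simp
  next
    case D: True
    have "A * z + B \<noteq> 0"
    proof
      assume U: "A * z + B = 0"
      show False
      proof (cases "A = 0")
        case True then show False using U nz D \<open>C = 0\<close> by simp
      next
        case False
        then have "z = - B / A" using U by (simp add: field_simps add_eq_0_iff)
        then have "z \<in> K" using sf_ops[OF sf] K by simp
        then show False using z by simp
      qed
    qed
    then show ?thesis using True D by simp
  qed
qed

context
  fixes av :: "'c::field \<Rightarrow> real"
  assumes na: "nonarch_abs av"
begin

lemmas [simp] = av_0[OF na] av_eq0[OF na] av_nonneg[OF na] av_minus[OF na] av_1[OF na]

lemma p1_subseq: "p1_conv av f x \<Longrightarrow> strict_mono s \<Longrightarrow> p1_conv av (\<lambda>j. f (s j)) x"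
  unfolding p1_conv_def using LIMSEQ_subseq_LIMSEQ[of "\<lambda>n. chord av (f n) x" 0 s] by (simp add: o_def)

lemma caseB:
  assumes K: "local_subfield av K"
    and g: "\<And>j. gl2 K (g j)"
    and sg: "\<And>j. \<sigma> j \<noteq> 0"
    and nrm: "\<And>j. mnorm av (msc (\<sigma> j) (g j)) = c" and c: "c > 0"
    and s: "strict_mono s"
    and MK: "ment K M" and Mc: "mconv av (\<lambda>j. msc (\<sigma> (s j)) (g (s j))) M" and d: "mdet M = 0"
    and x: "p1_conv av (\<lambda>j. moebius (g j) y) x"
  shows "in_P1 K x"
proof -
  have sf: "subfield K" using K unfolding local_subfield_def by blast
  define n where "n j = msc (\<sigma> (s j)) (g (s j))" for j
  have Mc': "mconv av n M" using Mc unfolding n_def .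
  have M0: "M \<noteq> (0, 0, 0, 0)"
  proof
    assume M: "M = (0, 0, 0, 0)"
    have t: "(\<lambda>j. av (mi (n j))) \<longlonglongrightarrow> 0" if "av_conv av (\<lambda>j. mi (n j)) (mi M)" "mi M = 0" for mi
      using conv_av[OF na that(1)] that(2) by simp
    have "(\<lambda>j. mnorm av (n j)) \<longlonglongrightarrow> max (max 0 0) (max 0 0)"
      unfolding mnorm_def using Mc' M unfolding mconv_def
      by (intro tendsto_max t) auto
    moreover have "mnorm av (n j) = c" for j unfolding n_def by (rule nrm)
    ultimately have "(\<lambda>j. c) \<longlonglongrightarrow> 0" by simp
    then have "c = 0" by (simp add: LIMSEQ_const_iff)
    then show False using c by simp
  qed
  show ?thesis
  proof (cases "in_P1 K y")
    case True
    have "in_P1 K (moebius (g j) y)" for j using moebius_P1[OF sf gl2_ment[OF g] True] .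
    then show ?thesis using P1_closed[OF na K _ x] by blast
  next
    case False
    then obtain z where y: "y = Some z" and z: "z \<notin> K" unfolding in_P1_def by (cases y) auto
    show ?thesis
    proof (cases x)
      case None then show ?thesis unfolding in_P1_def by simp
    next
      case (Some z')
      have h: "p1_conv av (\<lambda>j. moebius (n j) (Some z)) (Some z')"
        using p1_subseq[OF x s] unfolding n_def y Some using moebius_msc[OF sg] by simp
      obtain N w where N: "\<And>j. j \<ge> N \<Longrightarrow> moebius (n j) (Some z) = Some (w j)"
        and w: "(\<lambda>j. av (w j - z')) \<longlonglongrightarrow> 0"
        using conv_Some[OF na h] by blast
      define u where "u j = m1 (n j) * z + m2 (n j)" for j
      define v where "v j = m3 (n j) * z + m4 (n j)" for j
      define U where "U = m1 M * z + m2 M"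
      define V where "V = m3 M * z + m4 M"
      have mo: "moebius (n j) (Some z) = (if v j = 0 then None else Some (u j / v j))" for j
        unfolding u_def v_def by (subst mat_eta[of "n j"]) simp
      have wv: "w j * v j = u j" if "j \<ge> N" for j
      proof -
        have "v j \<noteq> 0 \<and> w j = u j / v j" using N[OF that] mo[of j] by (auto split: if_splits)
        then show ?thesis by simp
      qed
      have cu: "av_conv av u U" unfolding u_def U_def using Mc' unfolding mconv_def
        by (intro conv_add[OF na] conv_mult[OF na] conv_const[OF na]) auto
      have cv: "av_conv av v V" unfolding v_def V_def using Mc' unfolding mconv_def
        by (intro conv_add[OF na] conv_mult[OF na] conv_const[OF na]) auto
      have cw: "av_conv av w z'" unfolding av_conv_def by (rule w)
      have "av_conv av (\<lambda>j. w (j + N) * v (j + N)) (z' * V)"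
        by (intro conv_mult[OF na] conv_shift[OF na] cw cv)
      moreover have "(\<lambda>j. w (j + N) * v (j + N)) = (\<lambda>j. u (j + N))" using wv by auto
      ultimately have "av_conv av (\<lambda>j. u (j + N)) (z' * V)" by simp
      then have e: "z' * V = U" using conv_unique[OF na _ conv_shift[OF na cu]] by blast
      have MK': "m1 M \<in> K" "m2 M \<in> K" "m3 M \<in> K" "m4 M \<in> K" using MK unfolding ment_def by auto
      have nz: "(m1 M, m2 M, m3 M, m4 M) \<noteq> (0,0,0,0)" using M0 mat_eta[of M] by simp
      have dd: "m1 M * m4 M - m2 M * m3 M = 0" using d mdet_ents[of M] by simp
      have r: "(V \<noteq> 0 \<and> U / V \<in> K) \<or> (V = 0 \<and> U \<noteq> 0)"
        unfolding U_def V_def by (rule rank1[OF sf MK' dd z nz])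
      then have Vn: "V \<noteq> 0" using e by auto
      then have "z' = U / V" using e by (simp add: field_simps)
      then show ?thesis using r Some Vn unfolding in_P1_def by auto
    qed
  qed
qed

end


lemma mid_mmul: "mmul mid X = X" by (cases X) (auto simp: mid_def)

lemma alg_eq:
  assumes d1: "mdet g1 \<noteq> 0" and d2: "mdet g2 \<noteq> 0" and t: "mmul g1 (madj g2) = msc t mid"
  shows "t \<noteq> 0 \<and> g2 = msc (mdet g2 / t) g1"
proof -
  have "mmul (mmul g1 (madj g2)) g2 = msc (mdet g2) g1"
    by (simp add: mmul_assoc madj_mmul mmul_msc_r mmul_mid)
  moreover have "mmul (mmul g1 (madj g2)) g2 = msc t g2"
    by (simp add: t mmul_msc_l mid_mmul)
  ultimately have e: "msc t g2 = msc (mdet g2) g1" by simp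
  have t0: "t \<noteq> 0"
  proof
    assume "t = 0"
    then have "msc (mdet g2) g1 = (0,0,0,0)" using e by (cases g2) simp
    then have "mdet g2 = 0 \<or> g1 = (0,0,0,0)" by (rule msc_zero)
    moreover have "g1 \<noteq> (0,0,0,0)" using d1 by auto
    ultimately show False using d2 by simp
  qed
  have "msc (1 / t) (msc t g2) = msc (1 / t) (msc (mdet g2) g1)" using e by simp
  then have "g2 = msc (mdet g2 / t) g1" using t0 by (simp add: msc_msc msc_1)
  with t0 show ?thesis by simp
qed

theorem lemma2p5:
  fixes p :: nat and av :: "'c::field \<Rightarrow> real"
    and S :: "'i set" and F :: "'i \<Rightarrow> 'c set" and \<Gamma> :: "('i \<Rightarrow> 'c mat2) set"
  assumes "is_C p av"
    and "finite S" and "S \<noteq> {}"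
    and "\<forall>q\<in>S. local_subfield av (F q)"
    and "pgl_subgroup S F \<Gamma>"
    and "pgl_discrete av S F \<Gamma>"
    and "x \<in> limit_set av S F \<Gamma>"
  shows "\<exists>q\<in>S. in_P1 (F q) (x q)"
proof (rule ccontr)
  assume nq: "\<not> (\<exists>q\<in>S. in_P1 (F q) (x q))"
  have na: "nonarch_abs av" using assms(1) unfolding is_C_def by blast
  note [simp] = av_0[OF na] av_eq0[OF na] av_nonneg[OF na] av_minus[OF na] av_1[OF na]
  have LS: "\<And>q. q \<in> S \<Longrightarrow> local_subfield av (F q)" using assms(4) by blast
  have sf: "\<And>q. q \<in> S \<Longrightarrow> subfield (F q)" using LS unfolding local_subfield_def by blast
  obtain y \<gamma> where \<gamma>\<Gamma>: "\<And>j. \<gamma> j \<in> \<Gamma>" and dist: "\<And>i j. i \<noteq> j \<Longrightarrow> \<not> pgl_eq S F (\<gamma> i) (\<gamma> j)"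
    and conv: "\<And>q. q \<in> S \<Longrightarrow> p1_conv av (\<lambda>j. moebius (\<gamma> j q) (y q)) (x q)"
    using assms(7) unfolding limit_set_def by blast
  have gl: "\<And>g q. g \<in> \<Gamma> \<Longrightarrow> q \<in> S \<Longrightarrow> gl2 (F q) (g q)"
    using assms(5) unfolding pgl_subgroup_def by blast
  have rex: "\<forall>q\<in>S. \<exists>r>0. \<forall>f :: nat \<Rightarrow> 'c mat2. (\<forall>j. ment (F q) (f j) \<and> mnorm av (f j) \<le> r) \<longrightarrow>
     (\<exists>s M. strict_mono s \<and> ment (F q) M \<and> mconv av (\<lambda>j. f (s j)) M)"
  proof
    fix q assume q: "q \<in> S"
    obtain r where "r > 0" "\<And>f :: nat \<Rightarrow> 'c mat2. (\<And>j. ment (F q) (f j) \<and> mnorm av (f j) \<le> r) \<Longrightarrow>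
     \<exists>s M. strict_mono s \<and> ment (F q) M \<and> mconv av (\<lambda>j. f (s j)) M"
      using mat_compact[OF na LS[OF q]] by blast
    then show "\<exists>r>0. \<forall>f :: nat \<Rightarrow> 'c mat2. (\<forall>j. ment (F q) (f j) \<and> mnorm av (f j) \<le> r) \<longrightarrow>
     (\<exists>s M. strict_mono s \<and> ment (F q) M \<and> mconv av (\<lambda>j. f (s j)) M)" by blast
  qed
  obtain r where rr: "\<forall>q\<in>S. r q > 0 \<and> (\<forall>f :: nat \<Rightarrow> 'c mat2. (\<forall>j. ment (F q) (f j) \<and> mnorm av (f j) \<le> r q) \<longrightarrow>
     (\<exists>s M. strict_mono s \<and> ment (F q) M \<and> mconv av (\<lambda>j. f (s j)) M))"
    using bchoice[OF rex] by (rule exE)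
  have r: "\<And>q. q \<in> S \<Longrightarrow> r q > 0" by (rule conjunct1[OF bspec[OF rr]])
  have comp: "\<And>q (f :: nat \<Rightarrow> 'c mat2). q \<in> S \<Longrightarrow> (\<forall>j. ment (F q) (f j) \<and> mnorm av (f j) \<le> r q) \<Longrightarrow>
     (\<exists>s M. strict_mono s \<and> ment (F q) M \<and> mconv av (\<lambda>j. f (s j)) M)"
  proof -
    fix q :: 'i and f :: "nat \<Rightarrow> 'c mat2"
    assume q: "q \<in> S" and h: "\<forall>j. ment (F q) (f j) \<and> mnorm av (f j) \<le> r q"
    have "\<forall>f :: nat \<Rightarrow> 'c mat2. (\<forall>j. ment (F q) (f j) \<and> mnorm av (f j) \<le> r q) \<longrightarrow>
     (\<exists>s M. strict_mono s \<and> ment (F q) M \<and> mconv av (\<lambda>j. f (s j)) M)"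
      using bspec[OF rr q] by (rule conjunct2)
    from this[rule_format, OF h[rule_format]] show "\<exists>s M. strict_mono s \<and> ment (F q) M \<and> mconv av (\<lambda>j. f (s j)) M" .
  qed
  have rhoex: "\<forall>q\<in>S. \<exists>\<rho>. \<rho> \<in> F q \<and> 0 < av \<rho> \<and> av \<rho> < r q"
    using LS r unfolding local_subfield_def by blast
  obtain \<rho> where \<rho>': "\<forall>q\<in>S. \<rho> q \<in> F q \<and> 0 < av (\<rho> q) \<and> av (\<rho> q) < r q"
    using bchoice[OF rhoex] by (rule exE)
  have \<rho>: "\<And>q. q \<in> S \<Longrightarrow> \<rho> q \<in> F q \<and> 0 < av (\<rho> q) \<and> av (\<rho> q) < r q" by (rule bspec[OF \<rho>'])
  have "\<forall>j q. \<exists>\<sigma>. q \<in> S \<longrightarrow> \<sigma> \<in> F q \<and> \<sigma> \<noteq> 0 \<and> ment (F q) (msc \<sigma> (\<gamma> j q)) \<and> mnorm av (msc \<sigma> (\<gamma> j q)) = av (\<rho> q)"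
  proof (intro allI)
    fix j q
    show "\<exists>\<sigma>. q \<in> S \<longrightarrow> \<sigma> \<in> F q \<and> \<sigma> \<noteq> 0 \<and> ment (F q) (msc \<sigma> (\<gamma> j q)) \<and> mnorm av (msc \<sigma> (\<gamma> j q)) = av (\<rho> q)"
    proof (cases "q \<in> S")
      case True
      have "\<rho> q \<noteq> 0" using \<rho>[OF True] by auto
      then show ?thesis using normalize[OF na sf[OF True] gl[OF \<gamma>\<Gamma> True]] \<rho>[OF True] by blast
    qed simp
  qed
  then have "\<exists>\<sigma>. \<forall>j q. q \<in> S \<longrightarrow> \<sigma> j q \<in> F q \<and> \<sigma> j q \<noteq> 0 \<and> ment (F q) (msc (\<sigma> j q) (\<gamma> j q))
      \<and> mnorm av (msc (\<sigma> j q) (\<gamma> j q)) = av (\<rho> q)" by (simp only: choice_iff)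
  then obtain \<sigma> where \<sigma>': "\<forall>j q. q \<in> S \<longrightarrow> \<sigma> j q \<in> F q \<and> \<sigma> j q \<noteq> 0 \<and> ment (F q) (msc (\<sigma> j q) (\<gamma> j q))
      \<and> mnorm av (msc (\<sigma> j q) (\<gamma> j q)) = av (\<rho> q)" by (rule exE)
  have \<sigma>: "\<And>j q. q \<in> S \<Longrightarrow> \<sigma> j q \<in> F q \<and> \<sigma> j q \<noteq> 0 \<and> ment (F q) (msc (\<sigma> j q) (\<gamma> j q))
      \<and> mnorm av (msc (\<sigma> j q) (\<gamma> j q)) = av (\<rho> q)" using \<sigma>' by simp
  define n where "n j q = msc (\<sigma> j q) (\<gamma> j q)" for j q
  define P where "P q t \<longleftrightarrow> (\<exists>M. ment (F q) M \<and> mconv av (\<lambda>j. n (t j) q) M)" for q and t :: "nat \<Rightarrow> nat"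
  have "\<exists>s::nat \<Rightarrow> nat. strict_mono s \<and> (\<forall>q\<in>S. P q s)"
  proof (rule common_subseq[OF assms(2)])
    fix q and t :: "nat \<Rightarrow> nat" assume q: "q \<in> S" and t: "strict_mono t"
    have "\<forall>j. ment (F q) (n (t j) q) \<and> mnorm av (n (t j) q) \<le> r q"
      using \<sigma>[OF q] \<rho>[OF q] unfolding n_def by (simp add: less_imp_le)
    then obtain u M where "strict_mono u" "ment (F q) M" "mconv av (\<lambda>j. n (t (u j)) q) M"
      using comp[OF q, of "\<lambda>j. n (t j) q"] by blast
    then show "\<exists>u::nat \<Rightarrow> nat. strict_mono u \<and> P q (t \<circ> u)" unfolding P_def o_def by blast
  next
    fix q t and u :: "nat \<Rightarrow> nat" assume "P q t" "strict_mono u"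
    then obtain M0 where "ment (F q) M0" "mconv av (\<lambda>j. n (t j) q) M0" unfolding P_def by blast
    moreover have "mconv av (\<lambda>j. n (t (u j)) q) M0"
      using mconv_subseq[OF na \<open>mconv av (\<lambda>j. n (t j) q) M0\<close> \<open>strict_mono u\<close>] by simp
    ultimately show "P q (t \<circ> u)" unfolding P_def o_def by blast
  qed
  then obtain s where s: "strict_mono s" and Ps: "\<forall>q\<in>S. P q s" by blast
  have "\<exists>M. \<forall>q\<in>S. ment (F q) (M q) \<and> mconv av (\<lambda>j. n (s j) q) (M q)"
    using Ps unfolding P_def by (rule bchoice)
  then obtain M where M': "\<forall>q\<in>S. ment (F q) (M q) \<and> mconv av (\<lambda>j. n (s j) q) (M q)"
    by (rule exE)
  have MK: "\<And>q. q \<in> S \<Longrightarrow> ment (F q) (M q)" and Mc: "\<And>q. q \<in> S \<Longrightarrow> mconv av (\<lambda>j. n (s j) q) (M q)"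
    using M' by auto
  show False
  proof (cases "\<exists>q\<in>S. mdet (M q) = 0")
    case True
    then obtain q where q: "q \<in> S" "mdet (M q) = 0" by blast
    have "in_P1 (F q) (x q)"
    proof (rule caseB[OF na LS[OF q(1)]])
      show "\<And>j. gl2 (F q) (\<gamma> j q)" using gl[OF \<gamma>\<Gamma> q(1)] .
      show "\<And>j. \<sigma> j q \<noteq> 0" using \<sigma>[OF q(1)] by blast
      show "\<And>j. mnorm av (msc (\<sigma> j q) (\<gamma> j q)) = av (\<rho> q)" using \<sigma>[OF q(1)] by blast
      show "av (\<rho> q) > 0" using \<rho>[OF q(1)] by blast
      show "strict_mono s" by (rule s)
      show "ment (F q) (M q)" by (rule MK[OF q(1)])
      show "mconv av (\<lambda>j. msc (\<sigma> (s j) q) (\<gamma> (s j) q)) (M q)" using Mc[OF q(1)] unfolding n_def .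
      show "mdet (M q) = 0" by (rule q(2))
      show "p1_conv av (\<lambda>j. moebius (\<gamma> j q) (y q)) (x q)" by (rule conv[OF q(1)])
    qed
    then show False using nq q by blast
  next
    case False
    then have dM: "\<And>q. q \<in> S \<Longrightarrow> mdet (M q) \<noteq> 0" by blast
    obtain e where e\<Gamma>: "e \<in> \<Gamma>" and epg: "pgl_eq S F (\<lambda>_. mid) e"
      using assms(5) unfolding pgl_subgroup_def by blast
    have lamex: "\<forall>q\<in>S. \<exists>l. l \<in> F q \<and> l \<noteq> 0 \<and> e q = msc l mid"
      using epg unfolding pgl_eq_def proj_eq_def by blast
    obtain lam where lam': "\<forall>q\<in>S. lam q \<in> F q \<and> lam q \<noteq> 0 \<and> e q = msc (lam q) mid"
      using bchoice[OF lamex] by (rule exE)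
    have lam: "\<And>q. q \<in> S \<Longrightarrow> lam q \<in> F q \<and> lam q \<noteq> 0 \<and> e q = msc (lam q) mid"
      by (rule bspec[OF lam'])
    obtain \<epsilon> where \<epsilon>: "\<epsilon> > 0" and disc: "\<And>h. h \<in> \<Gamma> \<Longrightarrow>
        (\<forall>q\<in>S. \<exists>l\<in>F q. l \<noteq> 0 \<and> mclose av \<epsilon> (msc l (h q)) (e q)) \<Longrightarrow> pgl_eq S F e h"
      using assms(6) e\<Gamma> unfolding pgl_discrete_def by blast
    define X where "X q N = msc (lam q / mdet (M q)) (mmul (n (s N) q) (madj (n (s (Suc N)) q)))" for q N
    have XC: "mconv av (\<lambda>N. X q N) (e q)" if q: "q \<in> S" for q
    proof -
      have c1: "mconv av (\<lambda>N. n (s N) q) (M q)" by (rule Mc[OF q])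
      have c2: "mconv av (\<lambda>N. n (s (Suc N)) q) (M q)"
        using mconv_shift[OF na c1, of 1] by simp
      have "mconv av (\<lambda>N. X q N) (msc (lam q / mdet (M q)) (mmul (M q) (madj (M q))))"
        unfolding X_def by (intro mconv_msc[OF na] mconv_mmul[OF na] mconv_madj[OF na] c1 c2)
      moreover have "msc (lam q / mdet (M q)) (mmul (M q) (madj (M q))) = e q"
        using dM[OF q] lam[OF q] by (simp add: mmul_adj msc_msc)
      ultimately show ?thesis by simp
    qed
    have "\<forall>\<^sub>F N in sequentially. \<forall>q\<in>S. mclose av \<epsilon> (X q N) (e q)"
      using assms(2) by (rule eventually_ball_finite) (use mconv_close[OF na XC \<epsilon>] in blast)
    then obtain N where XN: "\<And>q. q \<in> S \<Longrightarrow> mclose av \<epsilon> (X q N) (e q)"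
      by (auto simp: eventually_sequentially)
    define \<alpha> where "\<alpha> = s N"
    define \<beta> where "\<beta> = s (Suc N)"
    have ab: "\<alpha> \<noteq> \<beta>" using s unfolding \<alpha>_def \<beta>_def strict_mono_def by (metis lessI less_irrefl)
    obtain k1 where k1\<Gamma>: "k1 \<in> \<Gamma>" and k1: "pgl_eq S F (\<lambda>q. madj (\<gamma> \<beta> q)) k1"
      using assms(5) \<gamma>\<Gamma>[of \<beta>] unfolding pgl_subgroup_def by blast
    obtain k where k\<Gamma>: "k \<in> \<Gamma>" and k: "pgl_eq S F (\<lambda>q. mmul (\<gamma> \<alpha> q) (k1 q)) k"
      using assms(5) \<gamma>\<Gamma>[of \<alpha>] k1\<Gamma> unfolding pgl_subgroup_def by blast
    have key: "(\<exists>l\<in>F q. l \<noteq> 0 \<and> mclose av \<epsilon> (msc l (k q)) (e q)) \<and>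
        (proj_eq (F q) (e q) (k q) \<longrightarrow> proj_eq (F q) (\<gamma> \<alpha> q) (\<gamma> \<beta> q))" if q: "q \<in> S" for q
    proof -
      obtain \<nu> where \<nu>: "\<nu> \<in> F q" "\<nu> \<noteq> 0" "k1 q = msc \<nu> (madj (\<gamma> \<beta> q))"
        using k1 q unfolding pgl_eq_def proj_eq_def by blast
      obtain \<mu> where \<mu>: "\<mu> \<in> F q" "\<mu> \<noteq> 0" "k q = msc \<mu> (mmul (\<gamma> \<alpha> q) (k1 q))"
        using k q unfolding pgl_eq_def proj_eq_def by blast
      define D where "D = mdet (M q)"
      have D0: "D \<noteq> 0" unfolding D_def by (rule dM[OF q])
      have DK: "D \<in> F q" unfolding D_def by (rule ment_det[OF sf[OF q] MK[OF q]])
      have sa: "\<sigma> \<alpha> q \<in> F q" "\<sigma> \<alpha> q \<noteq> 0" using \<sigma>[OF q] by auto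
      have sb: "\<sigma> \<beta> q \<in> F q" "\<sigma> \<beta> q \<noteq> 0" using \<sigma>[OF q] by auto
      define Z where "Z = mmul (\<gamma> \<alpha> q) (madj (\<gamma> \<beta> q))"
      have kq: "k q = msc (\<mu> * \<nu>) Z" unfolding Z_def \<mu>(3) \<nu>(3) by (simp add: mmul_msc_r msc_msc)
      have Xq: "X q N = msc (lam q / D * (\<sigma> \<alpha> q * \<sigma> \<beta> q)) Z"
        unfolding X_def Z_def n_def D_def \<alpha>_def \<beta>_def
        by (simp add: madj_msc mmul_msc_l mmul_msc_r msc_msc mult_ac)
      define l where "l = lam q * \<sigma> \<alpha> q * \<sigma> \<beta> q / (\<mu> * \<nu> * D)"
      have lK: "l \<in> F q" unfolding l_def using sf_ops[OF sf[OF q]] lam[OF q] sa sb \<mu> \<nu> DK by simp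
      have l0: "l \<noteq> 0" unfolding l_def using lam[OF q] sa sb \<mu> \<nu> D0 by simp
      have "msc l (k q) = X q N" unfolding kq Xq msc_msc l_def using \<mu> \<nu> D0
        by (simp add: field_simps)
      then have close: "\<exists>l\<in>F q. l \<noteq> 0 \<and> mclose av \<epsilon> (msc l (k q)) (e q)" using XN[OF q] lK l0 by auto
      have imp: "proj_eq (F q) (\<gamma> \<alpha> q) (\<gamma> \<beta> q)" if pe: "proj_eq (F q) (e q) (k q)"
      proof -
        obtain l' where l': "l' \<in> F q" "l' \<noteq> 0" "k q = msc l' (e q)" using pe unfolding proj_eq_def by blast
        have "msc (\<mu> * \<nu>) Z = msc (l' * lam q) mid" using kq l'(3) lam[OF q] by (simp add: msc_msc)
        then have "msc (1 / (\<mu> * \<nu>)) (msc (\<mu> * \<nu>) Z) = msc (1 / (\<mu> * \<nu>)) (msc (l' * lam q) mid)" by simp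
        then have Zt: "Z = msc (l' * lam q / (\<mu> * \<nu>)) mid" using \<mu> \<nu> by (simp add: msc_msc msc_1)
        have g1: "gl2 (F q) (\<gamma> \<alpha> q)" and g2: "gl2 (F q) (\<gamma> \<beta> q)" using gl[OF \<gamma>\<Gamma> q] by auto
        have d1: "mdet (\<gamma> \<alpha> q) \<noteq> 0" and d2: "mdet (\<gamma> \<beta> q) \<noteq> 0" using g1 g2 unfolding gl2_def by auto
        define t where "t = l' * lam q / (\<mu> * \<nu>)"
        have tK: "t \<in> F q" unfolding t_def using sf_ops[OF sf[OF q]] lam[OF q] \<mu> \<nu> l' by simp
        have "t \<noteq> 0 \<and> \<gamma> \<beta> q = msc (mdet (\<gamma> \<beta> q) / t) (\<gamma> \<alpha> q)"
          using alg_eq[OF d1 d2] Zt unfolding Z_def t_def by blast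
        moreover have "mdet (\<gamma> \<beta> q) \<in> F q" by (rule ment_det[OF sf[OF q] gl2_ment[OF g2]])
        ultimately show ?thesis unfolding proj_eq_def using d2 sf_ops[OF sf[OF q]] tK
          by (intro bexI[of _ "mdet (\<gamma> \<beta> q) / t"]) auto
      qed
      show ?thesis using close imp by blast
    qed
    have "pgl_eq S F e k" using disc[OF k\<Gamma>] key by blast
    then have "pgl_eq S F (\<gamma> \<alpha>) (\<gamma> \<beta>)" using key unfolding pgl_eq_def by blast
    then show False using dist[OF ab] by blast
  qed
qed

end
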